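(* Let $A\in\mathcal{CP}_n$ have a unique CP representation $A=\sum_{i=1}^k\mathbf b_i\mathbf b_i^T$ (with $\mathbf b_i\in\mathbb R^n_+$). Then the minimal face of $\mathcal{CP}_n$ containing $A$ is the polyhedral cone \[\mathcal F^A_{\mathcal{CP}_n}=\operatorname{cone}\{\mathbf b_i\mathbf b_i^T : 1\le i\le k\}.\]
   Context: A symmetric $n\times n$ matrix $A$ is completely positive if $A=BB^T$ for some entrywise nonnegative matrix $B$; $\mathcal{CP}_n$ is the convex cone of $n\times n$ completely positive matrices. A CP representation of $A$ is an expression $A=\sum_{i=1}^k\mathbf b_i\mathbf b_i^T$ with $\mathbf b_i\ge\mathbf 0$ (equivalently a CP factorization $A=BB^T$ with columns $\mathbf b_i$); only representations with pairwise linearly independent $\mathbf b_i$ are considered, and representations differing only in the order of the summands are considered equal. A subcone $\mathcal F$ of a convex cone $\mathcal K$ is a face if $X,Y\in\mathcal K$ and $X+Y\in\mathcal F$ imply $X,Y\in\mathcal F$. The minimal face containing $A$ is the intersection of all faces of $\mathcal{CP}_n$ containing $A$. $\operatorname{cone}S$ denotes the set of all finite nonnegative linear combinations of elements of $S$. *)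

theory Defs
  imports "HOL-Analysis.Analysis"
begin

definition outer :: "real^'n \<Rightarrow> real^'n^'n" where
  "outer b = (\<chi> i j. b $ i * b $ j)"

definition nonneg_vec :: "real^'n \<Rightarrow> bool" where
  "nonneg_vec b \<longleftrightarrow> (\<forall>i. 0 \<le> b $ i)"

text \<open>Completely positive cone: A = B B^T with B entrywise nonnegative,
  i.e. A is a finite sum of b b^T over the (nonnegative) columns b of B.\<close>
definition CP_cone :: "(real^'n^'n) set" where
  "CP_cone = {A. \<exists>(k::nat) (bs :: nat \<Rightarrow> real^'n).
      (\<forall>i<k. nonneg_vec (bs i)) \<and> A = (\<Sum>i<k. outer (bs i))}"

text \<open>A CP representation, taken up to order of summands (hence a set of
  vectors), with pairwise linearly independent nonnegative vectors.\<close>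
definition is_CP_rep :: "real^'n^'n \<Rightarrow> (real^'n) set \<Rightarrow> bool" where
  "is_CP_rep A S \<longleftrightarrow> finite S \<and> (\<forall>b\<in>S. nonneg_vec b)
     \<and> (\<forall>b\<in>S. \<forall>c\<in>S. b \<noteq> c \<longrightarrow> independent {b, c})
     \<and> A = (\<Sum>b\<in>S. outer b)"

definition cone_face :: "'a::real_vector set \<Rightarrow> 'a set \<Rightarrow> bool" where
  "cone_face F K \<longleftrightarrow> F \<subseteq> K \<and> convex_cone F \<and>
     (\<forall>X\<in>K. \<forall>Y\<in>K. X + Y \<in> F \<longrightarrow> X \<in> F \<and> Y \<in> F)"

definition minimal_face :: "'a::real_vector set \<Rightarrow> 'a \<Rightarrow> 'a set" where
  "minimal_face K A = \<Inter>{F. cone_face F K \<and> A \<in> F}"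

definition cone_gen :: "'a::real_vector set \<Rightarrow> 'a set" where
  "cone_gen T = {x. \<exists>U c. finite U \<and> U \<subseteq> T \<and> (\<forall>u\<in>U. 0 \<le> c u)
      \<and> x = (\<Sum>u\<in>U. c u *\<^sub>R u)}"

end

theory Submission
  imports Defs
begin
lemma ind2:
  fixes a b :: "real^'n"
  assumes "a \<noteq> b"
  shows "independent {a,b} \<longleftrightarrow> b \<noteq> 0 \<and> (\<forall>k. a \<noteq> k *\<^sub>R b)"
  using assms by (auto simp: independent_insert span_singleton)
lemma outer_scale: "outer (c *\<^sub>R v) = (c^2) *\<^sub>R outer v"
  by (simp add: outer_def vec_eq_iff power2_eq_square algebra_simps)
lemma outer_zero[simp]: "outer 0 = 0"
  by (simp add: outer_def vec_eq_iff)

definition par :: "real^'n \<Rightarrow> (real^'n) set \<Rightarrow> bool" where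
  "par x T \<longleftrightarrow> (\<exists>t\<in>T. \<exists>r>0. x = r *\<^sub>R t)"

lemma parI: "t \<in> U \<Longrightarrow> r > 0 \<Longrightarrow> x = r *\<^sub>R t \<Longrightarrow> par x U"
  unfolding par_def by blast

definition rep0 where "rep0 M T \<longleftrightarrow> is_CP_rep M T \<and> 0 \<notin> T"

lemma nonneg_scale: "nonneg_vec v \<Longrightarrow> 0 \<le> c \<Longrightarrow> nonneg_vec (c *\<^sub>R v)"
  by (simp add: nonneg_vec_def)

lemma nonneg_neg_mult:
  assumes "nonneg_vec v" "nonneg_vec y" "v = k *\<^sub>R y" "k \<le> 0"
  shows "v = 0"
proof -
  have "\<forall>i. v $ i = 0"
  proof
    fix i
    have "0 \<le> v $ i" "0 \<le> y $ i" using assms(1,2) by (auto simp: nonneg_vec_def)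
    moreover have "v $ i = k * y $ i" using assms(3) by simp
    ultimately show "v $ i = 0" using assms(4) by (smt (verit) mult_nonpos_nonneg)
  qed
  then show ?thesis by (simp add: vec_eq_iff)
qed

lemma merge_step:
  assumes R: "rep0 M T" and nv: "nonneg_vec v"
  shows "\<exists>T'. rep0 (M + outer v) T' \<and> (\<forall>t\<in>T. par t T') \<and> (v \<noteq> 0 \<longrightarrow> par v T')"
proof -
  from R have fin: "finite T" and nn: "\<forall>b\<in>T. nonneg_vec b"
    and pi: "\<forall>b\<in>T. \<forall>c\<in>T. b \<noteq> c \<longrightarrow> independent {b, c}"
    and M: "M = (\<Sum>b\<in>T. outer b)" and z: "0 \<notin> T"
    by (auto simp: rep0_def is_CP_rep_def)
  have parself: "\<And>u U. u \<in> U \<Longrightarrow> par u U" unfolding par_def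
    by (metis scaleR_one zero_less_one)
  consider "v = 0" | "\<exists>t\<in>T. \<exists>r>0. v = r *\<^sub>R t" | "v \<noteq> 0" "\<not> (\<exists>t\<in>T. \<exists>r>0. v = r *\<^sub>R t)"
    by blast
  then show ?thesis
  proof cases
    case 1
    then show ?thesis using R parself by auto
  next
    case 2
    then obtain t r where tT: "t \<in> T" and r: "r > 0" and vt: "v = r *\<^sub>R t" by blast
    define s where "s = sqrt (1 + r^2)"
    have s1: "s > 0" unfolding s_def by (simp add: add_pos_nonneg)
    have s2: "s^2 = 1 + r^2" unfolding s_def by (simp add: add_nonneg_nonneg)
    have t0: "t \<noteq> 0" using tT z by auto
    have sne: "s \<noteq> 1" using s2 r by auto
    have stne: "s *\<^sub>R t \<noteq> t" using sne t0
      by (metis scaleR_cancel_right scaleR_one)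
    have indst: "independent {s *\<^sub>R t, y}" if "y \<in> T" "y \<noteq> t" for y
    proof -
      have "independent {t, y}" using pi tT that by auto
      hence A: "y \<noteq> 0 \<and> (\<forall>k. t \<noteq> k *\<^sub>R y)" using ind2 that(2) by (metis)
      have "s *\<^sub>R t \<noteq> y"
      proof
        assume "s *\<^sub>R t = y"
        hence "t = (1/s) *\<^sub>R y" using s1 by auto
        thus False using A by blast
      qed
      moreover have "\<forall>k. s *\<^sub>R t \<noteq> k *\<^sub>R y"
      proof (intro allI notI)
        fix k assume "s *\<^sub>R t = k *\<^sub>R y"
        hence "t = (k/s) *\<^sub>R y" using s1
          by (metis (no_types, lifting) divide_inverse_commute inverse_eq_divide
              less_irrefl scaleR_scaleR vector_fraction_eq_iff)
        thus False using A by blast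
      qed
      ultimately show ?thesis using ind2 A by metis
    qed
    have stnotin: "s *\<^sub>R t \<notin> T - {t}"
    proof
      assume "s *\<^sub>R t \<in> T - {t}"
      hence "independent {t, s *\<^sub>R t}" using pi tT by auto
      moreover have "t \<noteq> s *\<^sub>R t" using stne by auto
      ultimately show False using ind2[of t "s *\<^sub>R t"] s1
        by (metis (no_types, lifting) divide_self_if less_irrefl scaleR_one scaleR_scaleR
            inverse_eq_divide divide_inverse_commute)
    qed
    define T' where "T' = insert (s *\<^sub>R t) (T - {t})"
    have "rep0 (M + outer v) T'"
      unfolding rep0_def is_CP_rep_def
    proof (intro conjI)
      show "finite T'" using fin by (simp add: T'_def)
      show "\<forall>b\<in>T'. nonneg_vec b" using nn tT s1 by (auto simp: T'_def intro: nonneg_scale)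
      show "\<forall>b\<in>T'. \<forall>c\<in>T'. b \<noteq> c \<longrightarrow> independent {b, c}"
        using pi indst by (auto simp: T'_def insert_commute)
      have "(\<Sum>b\<in>T'. outer b) = outer (s *\<^sub>R t) + (\<Sum>b\<in>T - {t}. outer b)"
        unfolding T'_def using fin stnotin by simp
      also have "\<dots> = outer v + (outer t + (\<Sum>b\<in>T - {t}. outer b))"
        by (simp add: vt outer_scale s2 algebra_simps)
      also have "\<dots> = outer v + M" using M fin tT by (simp add: sum.remove)
      finally show "M + outer v = (\<Sum>b\<in>T'. outer b)" by simp
      show "0 \<notin> T'" using z s1 t0 by (auto simp: T'_def)
    qed
    moreover have "\<forall>t'\<in>T. par t' T'"
    proof
      fix t' assume "t' \<in> T"
      show "par t' T'"
      proof (cases "t' = t")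
        case True
        have "t' = (1/s) *\<^sub>R (s *\<^sub>R t)" using True s1 by simp
        moreover have "s *\<^sub>R t \<in> T'" by (simp add: T'_def)
        ultimately show ?thesis using s1 by (intro parI[of "s *\<^sub>R t" _ "1/s"]) auto
      next
        case False
        hence "t' \<in> T'" using \<open>t' \<in> T\<close> by (simp add: T'_def)
        thus ?thesis by (rule parself)
      qed
    qed
    moreover have "par v T'"
    proof -
      have "v = (r/s) *\<^sub>R (s *\<^sub>R t)" using vt s1 by simp
      moreover have "s *\<^sub>R t \<in> T'" by (simp add: T'_def)
      ultimately show ?thesis using s1 r by (intro parI[of "s *\<^sub>R t" _ "r/s"]) auto
    qed
    ultimately show ?thesis by blast
  next
    case 3
    define T' where "T' = insert v T"
    have vnotin: "v \<notin> T"
    proof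
      assume "v \<in> T" thus False using 3(2) by (metis scaleR_one zero_less_one)
    qed
    have indv: "independent {v, y}" if "y \<in> T" for y
    proof -
      have "v \<noteq> y" using that vnotin by auto
      moreover have "y \<noteq> 0" using that z by auto
      moreover have "\<forall>k. v \<noteq> k *\<^sub>R y"
      proof (intro allI notI)
        fix k assume vk: "v = k *\<^sub>R y"
        show False
        proof (cases "k > 0")
          case True thus False using 3(2) that vk by blast
        next
          case False
          hence "v = 0" using nonneg_neg_mult[OF nv _ vk] nn that by auto
          thus False using 3(1) by simp
        qed
      qed
      ultimately show ?thesis using ind2 by metis
    qed
    have "rep0 (M + outer v) T'"
      unfolding rep0_def is_CP_rep_def
    proof (intro conjI)
      show "finite T'" using fin by (simp add: T'_def)
      show "\<forall>b\<in>T'. nonneg_vec b" using nn nv by (auto simp: T'_def)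
      show "\<forall>b\<in>T'. \<forall>c\<in>T'. b \<noteq> c \<longrightarrow> independent {b, c}"
        using pi indv by (auto simp: T'_def insert_commute)
      show "M + outer v = (\<Sum>b\<in>T'. outer b)" using M fin vnotin by (simp add: T'_def)
      show "0 \<notin> T'" using z 3(1) by (auto simp: T'_def)
    qed
    moreover have "\<forall>t\<in>T. par t T'" using parself[of _ T'] by (simp add: T'_def)
    moreover have "par v T'" using parself[of v T'] by (simp add: T'_def)
    ultimately show ?thesis by blast
  qed
qed

lemma par_trans: "par x U \<Longrightarrow> \<forall>t\<in>U. par t V \<Longrightarrow> par x V"
proof -
  assume "par x U" "\<forall>t\<in>U. par t V"
  then obtain t r where "t \<in> U" "r > 0" "x = r *\<^sub>R t" by (auto simp: par_def)
  moreover obtain t' r' where "t' \<in> V" "r' > 0" "t = r' *\<^sub>R t'"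
    using \<open>\<forall>t\<in>U. par t V\<close> \<open>t \<in> U\<close> by (auto simp: par_def)
  ultimately show ?thesis by (intro parI[of t' V "r*r'"]) auto
qed

lemma absorb:
  assumes "finite I" "\<forall>i\<in>I. nonneg_vec (w i)" "rep0 M T"
  shows "\<exists>T'. rep0 (M + (\<Sum>i\<in>I. outer (w i))) T' \<and> (\<forall>t\<in>T. par t T')
            \<and> (\<forall>i\<in>I. w i \<noteq> 0 \<longrightarrow> par (w i) T')"
  using assms(1,2)
proof (induction I rule: finite_induct)
  case empty
  have "\<forall>t\<in>T. par t T" by (metis parI scaleR_one zero_less_one)
  then show ?case using assms(3) by auto
next
  case (insert i F)
  then obtain T1 where T1: "rep0 (M + (\<Sum>i\<in>F. outer (w i))) T1" "\<forall>t\<in>T. par t T1"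
      "\<forall>j\<in>F. w j \<noteq> 0 \<longrightarrow> par (w j) T1" by auto
  obtain T2 where T2: "rep0 (M + (\<Sum>i\<in>F. outer (w i)) + outer (w i)) T2"
     "\<forall>t\<in>T1. par t T2" "w i \<noteq> 0 \<longrightarrow> par (w i) T2"
    using merge_step[OF T1(1), of "w i"] insert.prems by auto
  have "M + (\<Sum>i\<in>insert i F. outer (w i)) = M + (\<Sum>i\<in>F. outer (w i)) + outer (w i)"
    using insert.hyps by (simp add: algebra_simps)
  moreover have "\<forall>t\<in>T. par t T2" using T1(2) T2(2) par_trans by blast
  moreover have "\<forall>j\<in>insert i F. w j \<noteq> 0 \<longrightarrow> par (w j) T2" using T1(3) T2(2,3) par_trans by blast
  ultimately show ?case using T2(1) by metis
qed

lemma CP_zero: "0 \<in> CP_cone"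
  unfolding CP_cone_def by (rule CollectI, rule exI[of _ 0]) simp

lemma CP_add_outer:
  fixes A :: "real^'n^'n"
  assumes "A \<in> CP_cone" "nonneg_vec v" shows "A + outer v \<in> CP_cone"
proof -
  obtain k and bs :: "nat \<Rightarrow> real^'n" where "\<forall>i<k. nonneg_vec (bs i)" "A = (\<Sum>i<k. outer (bs i))"
    using assms(1) unfolding CP_cone_def mem_Collect_eq by blast
  then have "\<forall>i<Suc k. nonneg_vec ((bs(k:=v)) i)" "A + outer v = (\<Sum>i<Suc k. outer ((bs(k:=v)) i))"
    using assms(2) by auto
  then show ?thesis unfolding CP_cone_def by blast
qed

lemma CP_add:
  fixes A :: "real^'n^'n"
  assumes "A \<in> CP_cone" "B \<in> CP_cone" shows "A + B \<in> CP_cone"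
proof -
  obtain k and bs :: "nat \<Rightarrow> real^'n" where "\<forall>i<k. nonneg_vec (bs i)" "B = (\<Sum>i<k. outer (bs i))"
    using assms(2) unfolding CP_cone_def mem_Collect_eq by blast
  moreover have "\<forall>i<k. nonneg_vec (bs i) \<Longrightarrow> A + (\<Sum>i<k. outer (bs i)) \<in> CP_cone"
  proof (induction k)
    case 0 then show ?case using assms(1) by simp
  next
    case (Suc k)
    then have "A + (\<Sum>i<k. outer (bs i)) + outer (bs k) \<in> CP_cone"
      by (intro CP_add_outer) auto
    then show ?case by (simp add: algebra_simps)
  qed
  ultimately show ?thesis by simp
qed

lemma CP_sum:
  assumes "finite I" "\<forall>i\<in>I. nonneg_vec (w i)" shows "(\<Sum>i\<in>I. outer (w i)) \<in> CP_cone"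
  using assms
proof (induction I rule: finite_induct)
  case empty then show ?case using CP_zero by simp
next
  case (insert i F)
  then have "(\<Sum>i\<in>F. outer (w i)) + outer (w i) \<in> CP_cone" by (intro CP_add_outer) auto
  then show ?case using insert.hyps by (simp add: algebra_simps)
qed

lemma CP_scale:
  fixes A :: "real^'n^'n"
  assumes "A \<in> CP_cone" "0 \<le> c" shows "c *\<^sub>R A \<in> CP_cone"
proof -
  obtain k and bs :: "nat \<Rightarrow> real^'n" where "\<forall>i<k. nonneg_vec (bs i)" "A = (\<Sum>i<k. outer (bs i))"
    using assms(1) unfolding CP_cone_def mem_Collect_eq by blast
  moreover have "c *\<^sub>R A = (\<Sum>i<k. outer (sqrt c *\<^sub>R bs i))"
    using calculation(2) assms(2) by (simp add: outer_scale scaleR_sum_right)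
  ultimately show ?thesis using CP_sum[of "{..<k}" "\<lambda>i. sqrt c *\<^sub>R bs i"] assms(2)
    by (simp add: nonneg_scale)
qed

lemma CP_convex_cone: "convex_cone CP_cone"
  unfolding convex_cone_iff using CP_zero CP_add CP_scale by blast

lemma cg_zero: "0 \<in> cone_gen T"
  unfolding cone_gen_def by (rule CollectI, rule exI[of _ "{}"]) simp

lemma cg_mem: "x \<in> T \<Longrightarrow> x \<in> cone_gen T"
  unfolding cone_gen_def by (rule CollectI, rule exI[of _ "{x}"], rule exI[of _ "\<lambda>_. 1"]) simp

lemma cg_scale:
  assumes "x \<in> cone_gen T" "0 \<le> a" shows "a *\<^sub>R x \<in> cone_gen T"
proof -
  obtain U c where "finite U" "U \<subseteq> T" "\<forall>u\<in>U. 0 \<le> c u" "x = (\<Sum>u\<in>U. c u *\<^sub>R u)"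
    using assms(1) unfolding cone_gen_def by auto
  moreover have "a *\<^sub>R x = (\<Sum>u\<in>U. (a * c u) *\<^sub>R u)"
    using calculation(4) by (simp add: scaleR_sum_right)
  ultimately show ?thesis unfolding cone_gen_def using assms(2)
    by (intro CollectI exI[of _ U] exI[of _ "\<lambda>u. a * c u"]) auto
qed

lemma cg_add:
  assumes "x \<in> cone_gen T" "y \<in> cone_gen T" shows "x + y \<in> cone_gen T"
proof -
  obtain U c where U: "finite U" "U \<subseteq> T" "\<forall>u\<in>U. 0 \<le> c u" "x = (\<Sum>u\<in>U. c u *\<^sub>R u)"
    using assms(1) unfolding cone_gen_def by auto
  obtain V e where V: "finite V" "V \<subseteq> T" "\<forall>u\<in>V. 0 \<le> e u" "y = (\<Sum>u\<in>V. e u *\<^sub>R u)"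
    using assms(2) unfolding cone_gen_def by auto
  define f where "f u = (if u \<in> U then c u else 0) + (if u \<in> V then e u else 0)" for u
  have "(\<Sum>u\<in>U \<union> V. (if u \<in> U then c u else 0) *\<^sub>R u) = x"
    unfolding U(4) using U(1) V(1) by (intro sum.mono_neutral_cong_right) auto
  moreover have "(\<Sum>u\<in>U \<union> V. (if u \<in> V then e u else 0) *\<^sub>R u) = y"
    unfolding V(4) using U(1) V(1) by (intro sum.mono_neutral_cong_right) auto
  ultimately have "x + y = (\<Sum>u\<in>U \<union> V. f u *\<^sub>R u)"
    unfolding f_def by (simp add: scaleR_add_left sum.distrib)
  moreover have "\<forall>u\<in>U \<union> V. 0 \<le> f u" using U(3) V(3) by (auto simp: f_def)
  ultimately show ?thesis unfolding cone_gen_def using U(1,2) V(1,2)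
    by (intro CollectI exI[of _ "U \<union> V"] exI[of _ f]) auto
qed

lemma cg_sum:
  assumes "finite I" "\<forall>i\<in>I. f i \<in> cone_gen T" shows "sum f I \<in> cone_gen T"
  using assms by (induction I rule: finite_induct) (auto intro: cg_add cg_zero)

lemma cg_sub:
  assumes "convex_cone F" "T \<subseteq> F" shows "cone_gen T \<subseteq> F"
proof
  fix x assume "x \<in> cone_gen T"
  then obtain U c where U: "finite U" "U \<subseteq> T" "\<forall>u\<in>U. 0 \<le> c u" "x = (\<Sum>u\<in>U. c u *\<^sub>R u)"
    unfolding cone_gen_def by auto
  have "U \<subseteq> T \<Longrightarrow> (\<forall>u\<in>U. 0 \<le> c u) \<Longrightarrow> (\<Sum>u\<in>U. c u *\<^sub>R u) \<in> F"
    using U(1)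
  proof (induction U rule: finite_induct)
    case empty then show ?case using convex_cone_contains_0[OF assms(1)] by simp
  next
    case (insert u G)
    then show ?case using assms by (auto intro!: convex_cone_add convex_cone_scaleR)
  qed
  then show "x \<in> F" using U by simp
qed

lemma cg_convex_cone: "convex_cone (cone_gen T)"
  unfolding convex_cone_iff using cg_zero cg_add cg_scale by blast


lemma face_key:
  fixes A X Y :: "real^'n^'n" and S :: "(real^'n) set"
  assumes rep: "is_CP_rep A S"
    and uniq: "\<forall>T. is_CP_rep A T \<longrightarrow> T = S"
    and X: "X \<in> CP_cone" and Y: "Y \<in> CP_cone"
    and XY: "X + Y \<in> cone_gen (outer ` S)"
  shows "X \<in> cone_gen (outer ` S)"
proof -
  from rep have finS: "finite S" and nnS: "\<forall>b\<in>S. nonneg_vec b" and A: "A = (\<Sum>b\<in>S. outer b)"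
    by (auto simp: is_CP_rep_def)
  obtain kx and xs :: "nat \<Rightarrow> real^'n" where xs: "\<forall>i<kx. nonneg_vec (xs i)" "X = (\<Sum>i<kx. outer (xs i))"
    using X unfolding CP_cone_def mem_Collect_eq by blast
  obtain ky and ys :: "nat \<Rightarrow> real^'n" where ys: "\<forall>i<ky. nonneg_vec (ys i)" "Y = (\<Sum>i<ky. outer (ys i))"
    using Y unfolding CP_cone_def mem_Collect_eq by blast
  obtain U c where U: "finite U" "U \<subseteq> outer ` S" "\<forall>u\<in>U. 0 \<le> c u" "X + Y = (\<Sum>u\<in>U. c u *\<^sub>R u)"
    using XY unfolding cone_gen_def by auto
  obtain S' where S': "S' \<subseteq> S" "U = outer ` S'" "inj_on outer S'"
    using U(2) subset_image_inj by metis
  define d where "d b = (if b \<in> S' then c (outer b) else 0)" for b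
  have d0: "\<forall>b. 0 \<le> d b" using U(3) S'(2) by (auto simp: d_def)
  have "(\<Sum>u\<in>U. c u *\<^sub>R u) = (\<Sum>b\<in>S'. c (outer b) *\<^sub>R outer b)"
    using S'(2,3) by (simp add: sum.reindex)
  also have "\<dots> = (\<Sum>b\<in>S. d b *\<^sub>R outer b)"
    using S'(1) finS by (intro sum.mono_neutral_cong_left) (auto simp: d_def)
  finally have XYd: "X + Y = (\<Sum>b\<in>S. d b *\<^sub>R outer b)" using U(4) by simp
  define m where "m = 1 + (\<Sum>b\<in>S. d b)"
  have sd: "0 \<le> (\<Sum>b\<in>S. d b)" using d0 by (simp add: sum_nonneg)
  have m0: "m > 0" using sd by (simp add: m_def)
  have dm: "d b \<le> m" if "b \<in> S" for b
  proof -
    have "d b \<le> (\<Sum>b\<in>S. d b)" using finS that d0 by (intro member_le_sum) auto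
    thus ?thesis by (simp add: m_def)
  qed
  define w1 where "w1 i = (1 / sqrt m) *\<^sub>R xs i" for i
  define w2 where "w2 i = (1 / sqrt m) *\<^sub>R ys i" for i
  define w3 where "w3 b = sqrt (1 - d b / m) *\<^sub>R b" for b
  have r0: "rep0 0 {}" by (simp add: rep0_def is_CP_rep_def)
  obtain T1 where T1: "rep0 (0 + (\<Sum>i<kx. outer (w1 i))) T1"
      "\<forall>i\<in>{..<kx}. w1 i \<noteq> 0 \<longrightarrow> par (w1 i) T1"
    using absorb[OF _ _ r0, of "{..<kx}" w1] xs(1) m0 by (auto simp: w1_def nonneg_scale)
  obtain T2 where T2: "rep0 (0 + (\<Sum>i<kx. outer (w1 i)) + (\<Sum>i<ky. outer (w2 i))) T2"
      "\<forall>t\<in>T1. par t T2"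
    using absorb[OF _ _ T1(1), of "{..<ky}" w2] ys(1) m0 by (auto simp: w2_def nonneg_scale)
  have nn3: "\<forall>b\<in>S. nonneg_vec (w3 b)"
  proof
    fix b assume b: "b \<in> S"
    hence "0 \<le> 1 - d b / m" using dm m0 by simp
    thus "nonneg_vec (w3 b)" using nnS b by (simp add: w3_def nonneg_scale)
  qed
  obtain T3 where T3: "rep0 (0 + (\<Sum>i<kx. outer (w1 i)) + (\<Sum>i<ky. outer (w2 i))
         + (\<Sum>b\<in>S. outer (w3 b))) T3" "\<forall>t\<in>T2. par t T3"
    using absorb[OF finS nn3 T2(1)] by auto
  have e1: "(\<Sum>i<kx. outer (w1 i)) = (1/m) *\<^sub>R X"
    using m0 by (simp add: w1_def xs(2) outer_scale scaleR_sum_right power_divide)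
  have e2: "(\<Sum>i<ky. outer (w2 i)) = (1/m) *\<^sub>R Y"
    using m0 by (simp add: w2_def ys(2) outer_scale scaleR_sum_right power_divide)
  have "(\<Sum>b\<in>S. outer (w3 b)) = (\<Sum>b\<in>S. outer b - (1/m) *\<^sub>R (d b *\<^sub>R outer b))"
  proof (rule sum.cong[OF refl])
    fix b assume "b \<in> S"
    hence "0 \<le> 1 - d b / m" using dm m0 by simp
    thus "outer (w3 b) = outer b - (1/m) *\<^sub>R (d b *\<^sub>R outer b)"
      by (simp add: w3_def outer_scale algebra_simps)
  qed
  also have "\<dots> = A - (1/m) *\<^sub>R (X + Y)"
    by (simp add: sum_subtractf A XYd scaleR_sum_right)
  finally have e3: "(\<Sum>b\<in>S. outer (w3 b)) = A - (1/m) *\<^sub>R (X + Y)" .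
  have "0 + (\<Sum>i<kx. outer (w1 i)) + (\<Sum>i<ky. outer (w2 i)) + (\<Sum>b\<in>S. outer (w3 b)) = A"
    unfolding e1 e2 e3 by (simp add: algebra_simps)
  with T3(1) have "is_CP_rep A T3" by (simp add: rep0_def)
  with uniq have T3S: "T3 = S" by blast
  have "outer (xs i) \<in> cone_gen (outer ` S)" if "i < kx" for i
  proof (cases "xs i = 0")
    case True then show ?thesis by (simp add: cg_zero)
  next
    case False
    hence "w1 i \<noteq> 0" using m0 by (simp add: w1_def)
    hence "par (w1 i) T1" using T1(2) that by auto
    hence "par (w1 i) S" using T2(2) T3(2) T3S par_trans by metis
    then obtain t r where t: "t \<in> S" "r > 0" "w1 i = r *\<^sub>R t" by (auto simp: par_def)
    have "xs i = sqrt m *\<^sub>R w1 i" using m0 by (simp add: w1_def)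
    also have "\<dots> = (sqrt m * r) *\<^sub>R t" using t(3) by simp
    finally have "outer (xs i) = (sqrt m * r)^2 *\<^sub>R outer t" by (simp add: outer_scale)
    moreover have "outer t \<in> cone_gen (outer ` S)" using t(1) by (intro cg_mem) auto
    ultimately show ?thesis by (simp add: cg_scale)
  qed
  then show ?thesis using xs(2) by (auto intro: cg_sum)
qed

theorem corollary5p2:
  fixes A :: "real^'n^'n" and S :: "(real^'n) set"
  assumes "A \<in> CP_cone"
    and "is_CP_rep A S"
    and "\<forall>T. is_CP_rep A T \<longrightarrow> T = S"
  shows "minimal_face CP_cone A = cone_gen (outer ` S)"
proof -
  from assms(2) have finS: "finite S" and nnS: "\<forall>b\<in>S. nonneg_vec b" and A: "A = (\<Sum>b\<in>S. outer b)"
    by (auto simp: is_CP_rep_def)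
  have outCP: "outer b \<in> CP_cone" if "nonneg_vec b" for b
    using CP_add_outer[OF CP_zero that] by simp
  have Ain: "A \<in> cone_gen (outer ` S)" unfolding A
    using finS by (intro cg_sum) (auto intro: cg_mem)
  have face: "cone_face (cone_gen (outer ` S)) CP_cone"
    unfolding cone_face_def
  proof (intro conjI ballI impI)
    show "cone_gen (outer ` S) \<subseteq> CP_cone"
      using CP_convex_cone outCP nnS by (intro cg_sub) auto
    show "convex_cone (cone_gen (outer ` S))" by (rule cg_convex_cone)
    fix X Y assume XY: "X \<in> CP_cone" "Y \<in> CP_cone" "X + Y \<in> cone_gen (outer ` S)"
    show "X \<in> cone_gen (outer ` S)" using face_key[OF assms(2,3) XY] .
    show "Y \<in> cone_gen (outer ` S)" using face_key[OF assms(2,3) XY(2,1)] XY(3)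
      by (simp add: add.commute)
  qed
  have sub1: "minimal_face CP_cone A \<subseteq> cone_gen (outer ` S)"
    unfolding minimal_face_def using face Ain by (intro Inter_lower) auto
  have sub2: "cone_gen (outer ` S) \<subseteq> F" if F: "cone_face F CP_cone" "A \<in> F" for F
  proof (rule cg_sub)
    show cc: "convex_cone F" using F(1) by (simp add: cone_face_def)
    show "outer ` S \<subseteq> F"
    proof
      fix x assume "x \<in> outer ` S"
      then obtain b where b: "b \<in> S" "x = outer b" by auto
      have "A = outer b + (\<Sum>c\<in>S - {b}. outer c)" using A finS b(1) by (simp add: sum.remove)
      moreover have "(\<Sum>c\<in>S - {b}. outer c) \<in> CP_cone" using CP_sum[of "S - {b}" id] finS nnS by simp
      moreover have "outer b \<in> CP_cone" using outCP nnS b(1) by auto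
      ultimately have "outer b \<in> F" using F unfolding cone_face_def by metis
      thus "x \<in> F" using b by simp
    qed
  qed
  have "cone_gen (outer ` S) \<subseteq> minimal_face CP_cone A"
    unfolding minimal_face_def using sub2 by blast
  with sub1 show ?thesis by blast
qed

end
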